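(* Let $z_1,\dots,z_n$ be distinct integers, let $t$ be an integer, and let $w$ be a positive integer with $w<n$. Let $M_w\in\mathbb{Z}^{(w+1)\times(n+1)}$ have rows indexed by $r=0,1,\dots,w$ and columns by $j=1,\dots,n+1$, with entries $(M_w)_{r,j}=z_j^r$ for $1\le j\le n$, and last column given by $(M_w)_{r,n+1}=0$ for $r\le w-2$, $(M_w)_{w-1,n+1}=1$, $(M_w)_{w,n+1}=t$. Then $M_w$ has a null vector (a nonzero rational vector $v$ with $M_wv=0$) of Hamming weight $w+1$ if and only if $z_{i_1}+z_{i_2}+\cdots+z_{i_w}=t$ for some indices $i_1<i_2<\cdots<i_w$.
   Context: The Hamming weight of a vector is its number of nonzero coordinates. *)

theory Defs
  imports Complex_Main
begin

text \<open>Vectors in Q^(n+1) and matrices in Z^((w+1) x (n+1)) are represented as functions on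
  explicit index sets: columns j = 1..n+1, rows r = 0..w.\<close>

definition Mw :: "nat \<Rightarrow> nat \<Rightarrow> (nat \<Rightarrow> int) \<Rightarrow> int \<Rightarrow> nat \<Rightarrow> nat \<Rightarrow> int" where
  "Mw n w z t r j =
     (if j \<le> n then z j ^ r
      else if r = w then t
      else if r + 1 = w then 1
      else 0)"

definition hamming_weight :: "nat \<Rightarrow> (nat \<Rightarrow> rat) \<Rightarrow> nat" where
  "hamming_weight m v = card {j \<in> {1..m}. v j \<noteq> 0}"

definition is_null_vector :: "nat \<Rightarrow> nat \<Rightarrow> (nat \<Rightarrow> nat \<Rightarrow> int) \<Rightarrow> (nat \<Rightarrow> rat) \<Rightarrow> bool" where
  "is_null_vector rows cols M v \<longleftrightarrow>
     (\<exists>j\<in>{1..cols}. v j \<noteq> 0) \<and>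
     (\<forall>r\<in>{0..rows}. (\<Sum>j=1..cols. of_int (M r j) * v j) = 0)"

end

theory Submission
  imports Defs "HOL-Computational_Algebra.Polynomial"
begin

lemma Lexp: "(\<Sum>j\<in>A. v j * poly f (a j)) = (\<Sum>i\<le>degree f. coeff f i * (\<Sum>j\<in>A. v j * (a j :: 'a::comm_ring_1) ^ i))"
  unfolding poly_altdef by (simp add: sum_distrib_left mult_ac) (rule sum.swap)

lemma deg_lin_prod:
  fixes a :: "nat \<Rightarrow> 'a::idom"
  assumes "finite A"
  shows "degree (\<Prod>k\<in>A. [:-a k, 1:]) = card A" "lead_coeff (\<Prod>k\<in>A. [:-a k, 1:]) = 1"
proof -
  show "degree (\<Prod>k\<in>A. [:-a k, 1:]) = card A"
    by (subst degree_prod_eq_sum_degree) auto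
  show "lead_coeff (\<Prod>k\<in>A. [:-a k, 1:]) = 1"
    by (simp add: lead_coeff_prod)
qed

lemma vieta:
  fixes a :: "nat \<Rightarrow> 'a::idom"
  assumes "finite A" "A \<noteq> {}"
  shows "coeff (\<Prod>k\<in>A. [:-a k, 1:]) (card A - 1) = - (\<Sum>k\<in>A. a k)"
  using assms
proof (induction A rule: finite_ne_induct)
  case (singleton x) then show ?case by simp
next
  case (insert x F)
  have c1: "coeff (\<Prod>k\<in>F. [:-a k, 1:]) (card F) = 1"
    using deg_lin_prod[OF insert(1), of a] by simp
  have cF: "card F > 0" using insert by (simp add: card_gt_0_iff)
  have "coeff (\<Prod>k\<in>insert x F. [:-a k, 1:]) (card (insert x F) - 1)
     = coeff ([:-a x, 1:] * (\<Prod>k\<in>F. [:-a k, 1:])) (card F)"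
    using insert by simp
  also have "\<dots> = - a x * coeff (\<Prod>k\<in>F. [:-a k, 1:]) (card F) + coeff (\<Prod>k\<in>F. [:-a k, 1:]) (card F - 1)"
    using cF by (cases "card F") (auto simp: mult_pCons_left)
  also have "\<dots> = - (\<Sum>k\<in>insert x F. a k)" using insert c1 by simp
  finally show ?case .
qed

lemma vanish:
  fixes a :: "nat \<Rightarrow> rat"
  assumes A: "finite A" and inj: "inj_on a A" and h: "\<forall>r<card A. (\<Sum>j\<in>A. v j * a j ^ r) = 0"
    and j: "j \<in> A"
  shows "v j = 0"
proof -
  define Q where "Q = (\<Prod>k\<in>A-{j}. [:-a k, 1:])"
  have dQ: "degree Q = card A - 1" unfolding Q_def using A j by (simp add: deg_lin_prod)
  have cA: "card A > 0" using A j card_gt_0_iff by blast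
  have "(\<Sum>i\<in>A. v i * poly Q (a i)) = 0"
    unfolding Lexp using h dQ cA by (intro sum.neutral) auto
  moreover have "(\<Sum>i\<in>A. v i * poly Q (a i)) = v j * poly Q (a j)"
  proof -
    have "(\<Sum>i\<in>A. v i * poly Q (a i)) = v j * poly Q (a j) + (\<Sum>i\<in>A-{j}. v i * poly Q (a i))"
      using A j by (simp add: sum.remove)
    also have "(\<Sum>i\<in>A-{j}. v i * poly Q (a i)) = 0"
      unfolding Q_def poly_prod using A by (intro sum.neutral ballI) (auto intro!: prod_zero)
    finally show ?thesis by simp
  qed
  moreover have "poly Q (a j) \<noteq> 0"
    unfolding Q_def poly_prod using A inj j by (auto simp: inj_on_def)
  ultimately show ?thesis by simp
qed

lemma key:
  fixes a :: "nat \<Rightarrow> rat"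
  assumes S: "finite S" and inj: "inj_on a S" and ne: "S \<noteq> {}" and df: "degree f < card S"
  shows "(\<Sum>j\<in>S. poly f (a j) / (\<Prod>k\<in>S-{j}. (a j - a k))) = coeff f (card S - 1)"
proof -
  define D where "D j = (\<Prod>k\<in>S-{j}. (a j - a k))" for j
  define Q where "Q j = (\<Prod>k\<in>S-{j}. [:-a k, 1:])" for j
  define g where "g = (\<Sum>j\<in>S. smult (poly f (a j) / D j) (Q j))"
  have cS: "card S > 0" using S ne card_gt_0_iff by blast
  have dQ: "degree (Q j) = card S - 1" "lead_coeff (Q j) = 1" if "j \<in> S" for j
  proof -
    have "degree (Q j) = card (S - {j})" "lead_coeff (Q j) = 1"
      unfolding Q_def using S deg_lin_prod[of "S - {j}" a] by simp_all
    then show "degree (Q j) = card S - 1" "lead_coeff (Q j) = 1" using S that by auto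
  qed
  have D0: "D j \<noteq> 0" if "j \<in> S" for j
    unfolding D_def using S inj that by (auto simp: inj_on_def)
  have pQ: "poly (Q j) (a i) = (if i = j then D j else 0)" if "i \<in> S" "j \<in> S" for i j
    unfolding Q_def D_def poly_prod using S that by (auto intro!: prod_zero)
  have dg: "degree g \<le> card S - 1"
    unfolding g_def
    by (rule degree_sum_le) (use S in \<open>auto intro: order.trans[OF degree_smult_le] simp: dQ\<close>)
  have "f = g"
  proof (rule poly_eqI_degree[of "a ` S"])
    fix x assume "x \<in> a ` S"
    then obtain i where i: "i \<in> S" "x = a i" by auto
    have "poly g x = (\<Sum>j\<in>S. poly f (a j) / D j * poly (Q j) (a i))"
      unfolding g_def i by (simp add: poly_sum)
    also have "\<dots> = (\<Sum>j\<in>S. if j = i then poly f (a i) else 0)"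
      using D0 pQ i by (intro sum.cong) auto
    also have "\<dots> = poly f x" using S i by simp
    finally show "poly f x = poly g x" by simp
  next
    show "degree f < card (a ` S)" using df card_image[OF inj] by simp
    show "degree g < card (a ` S)" using dg cS card_image[OF inj] by simp
  qed
  have "coeff g (card S - 1) = (\<Sum>j\<in>S. poly f (a j) / D j * coeff (Q j) (card S - 1))"
    unfolding g_def by (simp add: coeff_sum)
  then have "coeff f (card S - 1) = (\<Sum>j\<in>S. poly f (a j) / D j * coeff (Q j) (card S - 1))"
    using \<open>f = g\<close> by simp
  also have "\<dots> = (\<Sum>j\<in>S. poly f (a j) / D j)"
    using dQ by (intro sum.cong) auto
  finally show ?thesis unfolding D_def by simp
qed

lemma rowsum:
  fixes v :: "nat \<Rightarrow> rat"
  shows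
  "(\<Sum>j=1..n+1. of_int (Mw n w z t r j) * v j) =
   (\<Sum>j\<in>{1..n}. v j * of_int (z j) ^ r) + of_int (Mw n w z t r (n+1)) * v (n+1)"
proof -
  have "{1..n+1} = insert (n+1) {1..n}" by auto
  then have "(\<Sum>j=1..n+1. of_int (Mw n w z t r j) * v j) =
     of_int (Mw n w z t r (n+1)) * v (n+1) + (\<Sum>j\<in>{1..n}. of_int (Mw n w z t r j) * v j)"
    by simp
  also have "(\<Sum>j\<in>{1..n}. of_int (Mw n w z t r j) * v j) = (\<Sum>j\<in>{1..n}. v j * of_int (z j) ^ r)"
    by (intro sum.cong) (auto simp: Mw_def mult_ac)
  finally show ?thesis by simp
qed

lemma mcol: "0 < w \<Longrightarrow> r \<le> w \<Longrightarrow> (of_int (Mw n w z t r (n+1)) :: rat) =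
   (if r = w then of_int t else 0) + (if r = w - 1 then 1 else 0)"
  by (auto simp: Mw_def)

theorem lemma2p6:
  fixes n w :: nat and z :: "nat \<Rightarrow> int" and t :: int
  assumes "inj_on z {1..n}" and "0 < w" and "w < n"
  shows "(\<exists>v. is_null_vector w (n + 1) (Mw n w z t) v \<and> hamming_weight (n + 1) v = w + 1)
     \<longleftrightarrow> (\<exists>S. S \<subseteq> {1..n} \<and> card S = w \<and> (\<Sum>i\<in>S. z i) = t)"
proof
  define a where "a j = (of_int (z j) :: rat)" for j
  have inja: "inj_on a S" if "S \<subseteq> {1..n}" for S
    using assms(1) that unfolding a_def inj_on_def by auto
  {
    assume "\<exists>v. is_null_vector w (n + 1) (Mw n w z t) v \<and> hamming_weight (n + 1) v = w + 1"
    then obtain v where nv: "is_null_vector w (n + 1) (Mw n w z t) v"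
      and hw: "hamming_weight (n + 1) v = w + 1" by blast
    define T where "T = {j\<in>{1..n+1}. v j \<noteq> 0}"
    define S where "S = {j\<in>{1..n}. v j \<noteq> 0}"
    have cT: "card T = w + 1" using hw unfolding hamming_weight_def T_def .
    have Ssub: "S \<subseteq> {1..n}" and finS: "finite S" unfolding S_def by auto
    define E where "E r = (\<Sum>j\<in>S. v j * a j ^ r)" for r
    have E: "E r + of_int (Mw n w z t r (n+1)) * v (n+1) = 0" if "r \<le> w" for r
    proof -
      have "(\<Sum>j\<in>{1..n}. v j * of_int (z j) ^ r) = E r"
        unfolding E_def a_def S_def by (rule sum.mono_neutral_right) auto
      with nv that rowsum[of n w z t r v] show ?thesis unfolding is_null_vector_def by auto
    qed
    show "\<exists>S. S \<subseteq> {1..n} \<and> card S = w \<and> (\<Sum>i\<in>S. z i) = t"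
    proof (cases "v (n+1) = 0")
      case True
      then have "T = S" unfolding T_def S_def by (auto simp: le_Suc_eq)
      then have cS: "card S = w + 1" using cT by simp
      then obtain j where j: "j \<in> S" by (metis card.empty ex_in_conv add_is_0 one_neq_zero)
      have "v j = 0"
        by (rule vanish[OF finS inja[OF Ssub] _ j]) (use E True cS in \<open>auto simp: E_def\<close>)
      with j show ?thesis unfolding S_def by auto
    next
      case False
      define c where "c = v (n+1)"
      have "T = insert (n+1) S" using False unfolding T_def S_def by auto
      then have cS: "card S = w" using cT finS unfolding S_def by (simp)
      have Sne: "S \<noteq> {}" using cS assms(2) by auto
      define P where "P = (\<Prod>k\<in>S. [:-a k, 1:])"
      have dP: "degree P = w" and lP: "coeff P w = 1"
        using deg_lin_prod[OF finS, of a] cS unfolding P_def by auto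
      have cP: "coeff P (w - 1) = - (\<Sum>k\<in>S. a k)"
        using vieta[OF finS Sne, of a] cS unfolding P_def by simp
      have "(\<Sum>j\<in>S. v j * poly P (a j)) = 0"
        unfolding P_def poly_prod using finS by (intro sum.neutral ballI) (auto intro!: prod_zero)
      also have "(\<Sum>j\<in>S. v j * poly P (a j)) = (\<Sum>i\<le>w. coeff P i * E i)"
        unfolding Lexp dP E_def ..
      also have "\<dots> = (\<Sum>i\<le>w. coeff P i * (- c * ((if i = w then of_int t else 0) + (if i = w - 1 then 1 else 0))))"
      proof (intro sum.cong refl)
        fix i assume "i \<in> {..w}"
        then have i: "i \<le> w" by simp
        have "E i = - (of_int (Mw n w z t i (n+1)) * c)"
          using E[OF i] unfolding c_def by (simp add: eq_neg_iff_add_eq_0)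
        then show "coeff P i * E i = coeff P i * (- c * ((if i = w then of_int t else 0) + (if i = w - 1 then 1 else 0)))"
          using mcol[OF assms(2) i, of n z t] by simp
      qed
      also have "\<dots> = - c * (of_int t + coeff P (w - 1))"
      proof -
        have "(\<Sum>i\<le>w. coeff P i * (- c * ((if i = w then of_int t else 0) + (if i = w - 1 then 1 else 0))))
          = (\<Sum>i\<le>w. (- c) * (if i = w then coeff P i * of_int t else 0) + (- c) * (if i = w - 1 then coeff P i else 0))"
          by (intro sum.cong refl) (simp add: algebra_simps)
        also have "\<dots> = - c * (coeff P w * of_int t) + - c * coeff P (w - 1)"
          by (simp only: sum.distrib sum_distrib_left[symmetric]) simp
        finally show ?thesis using lP by (simp add: algebra_simps)
      qed
      finally have "of_int t = (\<Sum>k\<in>S. a k)" using False cP unfolding c_def by simp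
      then have "t = (\<Sum>i\<in>S. z i)" unfolding a_def by (metis of_int_eq_iff of_int_sum)
      then show ?thesis using Ssub cS by auto
    qed
  }
  {
    assume "\<exists>S. S \<subseteq> {1..n} \<and> card S = w \<and> (\<Sum>i\<in>S. z i) = t"
    then obtain S where Ssub: "S \<subseteq> {1..n}" and cS: "card S = w" and St: "(\<Sum>i\<in>S. z i) = t" by blast
    have finS: "finite S" using Ssub finite_subset by blast
    have Sne: "S \<noteq> {}" using cS assms(2) by auto
    have nS: "n + 1 \<notin> S" using Ssub by auto
    define D where "D j = (\<Prod>k\<in>S-{j}. (a j - a k))" for j
    have D0: "D j \<noteq> 0" if "j \<in> S" for j
      unfolding D_def using finS inja[OF Ssub] that by (auto simp: inj_on_def)
    define v where "v j = (if j \<in> S then 1 / D j else if j = n + 1 then -1 else (0::rat))" for j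
    have K: "(\<Sum>j\<in>S. poly f (a j) / D j) = coeff f (w - 1)" if "degree f < w" for f
      using key[OF finS inja[OF Ssub] Sne, of f] that cS unfolding D_def by simp
    have row: "(\<Sum>j=1..n+1. of_int (Mw n w z t r j) * v j) = 0" if "r \<le> w" for r
    proof -
      have "(\<Sum>j\<in>{1..n}. v j * of_int (z j) ^ r) = (\<Sum>j\<in>S. a j ^ r / D j)"
        unfolding v_def a_def using Ssub by (intro sum.mono_neutral_cong_right) auto
      moreover have "(\<Sum>j\<in>S. a j ^ r / D j) = of_int (Mw n w z t r (n+1))"
      proof (cases "r = w")
        case False
        then have "r < w" using that by simp
        have "(\<Sum>j\<in>S. a j ^ r / D j) = (\<Sum>j\<in>S. poly (monom 1 r) (a j) / D j)"
          by (simp add: poly_monom)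
        also have "\<dots> = coeff (monom 1 r) (w - 1)" by (rule K) (use \<open>r < w\<close> in \<open>simp add: degree_monom_eq\<close>)
        finally show ?thesis using False \<open>r < w\<close> by (auto simp: Mw_def coeff_monom)
      next
        case True
        define P where "P = (\<Prod>k\<in>S. [:-a k, 1:])"
        have dP: "degree P = w" and lP: "coeff P w = 1"
          using deg_lin_prod[OF finS, of a] cS unfolding P_def by auto
        have cP: "coeff P (w - 1) = - (\<Sum>k\<in>S. a k)"
          using vieta[OF finS Sne, of a] cS unfolding P_def by simp
        define f where "f = monom 1 w - P"
        have "degree f \<le> w" unfolding f_def using dP
          by (intro degree_diff_le) (simp_all add: degree_monom_le)
        moreover have "degree f \<noteq> w"
        proof
          assume "degree f = w"
          moreover have "coeff f w = 0" unfolding f_def using lP by simp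
          ultimately have "f = 0" by (metis leading_coeff_0_iff)
          with \<open>degree f = w\<close> assms(2) show False by simp
        qed
        ultimately have df: "degree f < w" by simp
        have pf: "poly f (a j) = a j ^ w" if "j \<in> S" for j
          unfolding f_def P_def using that finS by (auto simp: poly_monom poly_prod intro!: prod_zero)
        have "(\<Sum>j\<in>S. a j ^ r / D j) = (\<Sum>j\<in>S. poly f (a j) / D j)"
          using True pf by simp
        also have "\<dots> = coeff f (w - 1)" by (rule K[OF df])
        also have "\<dots> = (\<Sum>k\<in>S. a k)" unfolding f_def using cP assms(2) by (simp add: coeff_monom)
        also have "\<dots> = of_int t" unfolding a_def using St by (metis of_int_sum)
        finally show ?thesis using True by (simp add: Mw_def)
      qed
      ultimately show ?thesis using rowsum[of n w z t r v] nS by (simp add: v_def)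
    qed
    have "{j\<in>{1..n+1}. v j \<noteq> 0} = insert (n+1) S"
      using Ssub D0 unfolding v_def by auto
    then have "hamming_weight (n + 1) v = w + 1"
      unfolding hamming_weight_def using finS nS cS by simp
    moreover have "is_null_vector w (n + 1) (Mw n w z t) v"
      unfolding is_null_vector_def using row nS by (auto simp: v_def intro!: bexI[of _ "n+1"])
    ultimately show "\<exists>v. is_null_vector w (n + 1) (Mw n w z t) v \<and> hamming_weight (n + 1) v = w + 1"
      by blast
  }
qed

end
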